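(* Let $q\in L^\infty(M)$ and $i$ a positive integer. The following are equivalent: (i) for every $u\in L^\infty_*(M)$, the quadratic form $Q^i_u(f)=\int_M uf^2\,dv$ is indefinite on $E_i(q)$; (ii) there exists a finite family of eigenfunctions $f_1,\dots,f_k\in E_i(q)$ such that $\sum_{j=1}^k f_j^2=1$.
   Context: $M$ is a compact connected Riemannian manifold, possibly with boundary, with volume element $dv$ and volume $V(M)$; $\Delta$ is the Laplace–Beltrami operator on functions, with Dirichlet or Neumann boundary conditions if $\partial M\ne\emptyset$ (boundary sufficiently regular, e.g. $C^1$, in the Neumann case). For real-valued $q\in L^\infty(M)$, the eigenvalues of $-\Delta+q$ repeated with multiplicity are $\lambda_1(q)<\lambda_2(q)\le\cdots$ and $E_i(q)$ is the eigenspace of $\lambda_i(q)$. $L^\infty_*(M)=\{u\in L^\infty(M):\int_M u\,dv=0\}$. A quadratic form is indefinite if it is neither positive definite nor negative definite, i.e. there exist nonzero $f,g$ with $Q(f)\le0\le Q(g)$. *)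

theory Defs
  imports "HOL-Analysis.Analysis"
begin

definition Linf :: "'a measure \<Rightarrow> ('a \<Rightarrow> real) set" where
  "Linf M = {u. u \<in> borel_measurable M \<and> (\<exists>C. AE x in M. \<bar>u x\<bar> \<le> C)}"

definition Linf_star :: "'a measure \<Rightarrow> ('a \<Rightarrow> real) set" where
  "Linf_star M = {u \<in> Linf M. integral\<^sup>L M u = 0}"

definition quad_form :: "'a measure \<Rightarrow> ('a \<Rightarrow> real) \<Rightarrow> ('a \<Rightarrow> real) \<Rightarrow> real" where
  "quad_form M u f = (\<integral>x. u x * (f x)\<^sup>2 \<partial>M)"

definition nonzero_ae :: "'a measure \<Rightarrow> ('a \<Rightarrow> real) \<Rightarrow> bool" where
  "nonzero_ae M f \<longleftrightarrow> \<not> (AE x in M. f x = 0)"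

definition indefinite_on :: "'a measure \<Rightarrow> ('a \<Rightarrow> real) set \<Rightarrow> (('a \<Rightarrow> real) \<Rightarrow> real) \<Rightarrow> bool" where
  "indefinite_on M E Q \<longleftrightarrow>
     (\<exists>f\<in>E. \<exists>g\<in>E. nonzero_ae M f \<and> nonzero_ae M g \<and> Q f \<le> 0 \<and> 0 \<le> Q g)"

definition fspan :: "nat \<Rightarrow> (nat \<Rightarrow> 'a \<Rightarrow> real) \<Rightarrow> ('a \<Rightarrow> real) set" where
  "fspan n b = {(\<lambda>x. \<Sum>j<n. c j * b j x) | c. True}"

end

theory Submission
  imports Defs "HOL-Library.Nat_Bijection"
begin


lemma Linf_integrable: "finite_measure M \<Longrightarrow> f \<in> Linf M \<Longrightarrow> integrable M f"
  unfolding Linf_def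
  using finite_measure.integrable_const_bound[of M f] by (auto simp: real_norm_def)

lemma Linf_const: "(\<lambda>x. c) \<in> Linf M"
  unfolding Linf_def by auto

lemma Linf_add: "f \<in> Linf M \<Longrightarrow> g \<in> Linf M \<Longrightarrow> (\<lambda>x. f x + g x) \<in> Linf M"
proof -
  assume f: "f \<in> Linf M" and g: "g \<in> Linf M"
  then obtain C D where C: "AE x in M. \<bar>f x\<bar> \<le> C" and D: "AE x in M. \<bar>g x\<bar> \<le> D"
    unfolding Linf_def by auto
  have "AE x in M. \<bar>f x + g x\<bar> \<le> C + D" using C D by eventually_elim auto
  then show ?thesis using f g unfolding Linf_def by auto
qed

lemma Linf_mult: "f \<in> Linf M \<Longrightarrow> g \<in> Linf M \<Longrightarrow> (\<lambda>x. f x * g x) \<in> Linf M"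
proof -
  assume f: "f \<in> Linf M" and g: "g \<in> Linf M"
  then obtain C D where C: "AE x in M. \<bar>f x\<bar> \<le> C" and D: "AE x in M. \<bar>g x\<bar> \<le> D"
    unfolding Linf_def by auto
  have "AE x in M. \<bar>f x * g x\<bar> \<le> C * D" using C D
  proof eventually_elim
    case (elim x)
    then have "\<bar>f x\<bar> * \<bar>g x\<bar> \<le> C * D" by (intro mult_mono) auto
    then show ?case by (simp add: abs_mult)
  qed
  then show ?thesis using f g unfolding Linf_def by auto
qed

lemma Linf_minus: "f \<in> Linf M \<Longrightarrow> g \<in> Linf M \<Longrightarrow> (\<lambda>x. f x - g x) \<in> Linf M"
proof -
  assume f: "f \<in> Linf M" and g: "g \<in> Linf M"
  have "(\<lambda>x. (-1) * g x) \<in> Linf M" using Linf_mult[OF Linf_const g] .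
  then have "(\<lambda>x. f x + (-1) * g x) \<in> Linf M" using f by (rule Linf_add[rotated])
  then show ?thesis by simp
qed

lemma Linf_power2: "f \<in> Linf M \<Longrightarrow> (\<lambda>x. (f x)\<^sup>2) \<in> Linf M"
  unfolding power2_eq_square by (rule Linf_mult)

lemma Linf_sum: "(\<And>i. i \<in> I \<Longrightarrow> f i \<in> Linf M) \<Longrightarrow> (\<lambda>x. \<Sum>i\<in>I. f i x) \<in> Linf M"
proof (induction I rule: infinite_finite_induct)
  case (insert i I)
  then have "(\<lambda>x. f i x + (\<Sum>i\<in>I. f i x)) \<in> Linf M" by (intro Linf_add) auto
  then show ?case using insert by simp
qed (auto intro: Linf_const)

definition lc :: "nat \<Rightarrow> (nat \<Rightarrow> 'a \<Rightarrow> real) \<Rightarrow> (nat \<Rightarrow> real) \<Rightarrow> 'a \<Rightarrow> real" where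
  "lc m B c = (\<lambda>x. \<Sum>a<m. c a * B a x)"

lemma lc_Linf: "(\<And>a. a < m \<Longrightarrow> B a \<in> Linf M) \<Longrightarrow> lc m B c \<in> Linf M"
  unfolding lc_def by (intro Linf_sum Linf_mult Linf_const) auto

lemma Linf_meas: "f \<in> Linf M \<Longrightarrow> f \<in> borel_measurable M"
  unfolding Linf_def by auto

lemma compact_box:
  fixes S :: "'i \<Rightarrow> ('b::topological_space) set"
  assumes "\<And>i. compact (S i)"
  shows "compact (Pi UNIV S)"
proof -
  have "compactin (product_topology (\<lambda>i. euclidean) UNIV) (PiE UNIV S)"
    using assms by (subst compactin_PiE) auto
  then show ?thesis by (simp add: euclidean_product_topology PiE_UNIV_domain)
qed

lemma cont_coord2[continuous_intros]:
  "continuous_on S (\<lambda>d::nat \<Rightarrow> nat \<Rightarrow> real. d i a)"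
proof -
  have "continuous_on S (\<lambda>d::nat \<Rightarrow> nat \<Rightarrow> real. d i)"
    by (rule continuous_on_subset[OF continuous_on_product_coordinates]) simp
  then show ?thesis by (rule continuous_on_product_then_coordinatewise)
qed

lemma cont_coord1[continuous_intros]:
  "continuous_on S (\<lambda>d::nat \<Rightarrow> real. d a)"
  by (rule continuous_on_subset[OF continuous_on_product_coordinates]) simp

lemma cont_integral:
  fixes \<Phi> :: "'p::metric_space \<Rightarrow> 'a \<Rightarrow> real"
  assumes fm: "finite_measure M"
    and meas: "\<And>d. d \<in> K \<Longrightarrow> \<Phi> d \<in> borel_measurable M"
    and bnd: "AE x in M. \<forall>d\<in>K. \<bar>\<Phi> d x\<bar> \<le> C"
    and cont: "\<And>x. continuous_on K (\<lambda>d. \<Phi> d x)"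
  shows "continuous_on K (\<lambda>d. \<integral>x. \<Phi> d x \<partial>M)"
proof (rule continuous_on_sequentiallyI)
  fix u a assume u: "\<forall>n. u n \<in> K" and a: "a \<in> K" and lim: "u \<longlonglongrightarrow> a"
  show "(\<lambda>n. \<integral>x. \<Phi> (u n) x \<partial>M) \<longlonglongrightarrow> (\<integral>x. \<Phi> a x \<partial>M)"
  proof (rule integral_dominated_convergence[where w="\<lambda>x. C"])
    show "\<Phi> a \<in> borel_measurable M" using meas a .
    show "\<And>i. \<Phi> (u i) \<in> borel_measurable M" using meas u by auto
    show "integrable M (\<lambda>x. C)" using fm finite_measure.integrable_const by blast
    show "AE x in M. (\<lambda>i. \<Phi> (u i) x) \<longlonglongrightarrow> \<Phi> a x"
    proof (rule AE_I2)
      fix x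
      have "((\<lambda>d. \<Phi> d x) \<circ> u) \<longlonglongrightarrow> \<Phi> a x"
        using cont[of x] a u lim unfolding continuous_on_sequentially by blast
      then show "(\<lambda>i. \<Phi> (u i) x) \<longlonglongrightarrow> \<Phi> a x" by (simp add: o_def)
    qed
    show "AE x in M. norm (\<Phi> (u i) x) \<le> C" for i
      using bnd by eventually_elim (insert u, auto)
  qed
qed



lemma lc_Suc: "lc (Suc m) B c x = lc m B c x + c m * B m x"
  by (simp add: lc_def)

lemma lc_cong: "(\<And>a. a < m \<Longrightarrow> c a = c' a) \<Longrightarrow> (\<And>a. a < m \<Longrightarrow> B a = B' a) \<Longrightarrow> lc m B c x = lc m B' c' x"
  unfolding lc_def by (intro sum.cong) auto

lemma lc_add: "lc m B (\<lambda>a. c a + d a) x = lc m B c x + lc m B d x"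
  by (simp add: lc_def sum.distrib algebra_simps)

lemma lc_scale: "lc m B (\<lambda>a. t * c a) x = t * lc m B c x"
  by (simp add: lc_def sum_distrib_left algebra_simps)

lemma lc_zero: "lc 0 B c x = 0"
  by (simp add: lc_def)

definition indep :: "'a measure \<Rightarrow> nat \<Rightarrow> (nat \<Rightarrow> 'a \<Rightarrow> real) \<Rightarrow> bool" where
  "indep M m B \<longleftrightarrow> (\<forall>c. (AE x in M. lc m B c x = 0) \<longrightarrow> (\<forall>a<m. c a = 0))"

lemma reduce:
  assumes "\<And>j. j < n \<Longrightarrow> b j \<in> Linf M"
  shows "\<exists>m B. (\<forall>a<m. B a \<in> Linf M) \<and> indep M m B
     \<and> (\<forall>c. \<exists>c'. AE x in M. lc n b c x = lc m B c' x)
     \<and> (\<forall>c'. \<exists>c. AE x in M. lc m B c' x = lc n b c x)"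
  using assms
proof (induction n)
  case 0
  show ?case
    by (rule exI[of _ 0], rule exI[of _ b]) (auto simp: indep_def lc_zero)
next
  case (Suc n)
  then obtain m B where B: "\<forall>a<m. B a \<in> Linf M" "indep M m B"
    and fw: "\<forall>c. \<exists>c'. AE x in M. lc n b c x = lc m B c' x"
    and bw: "\<forall>c'. \<exists>c. AE x in M. lc m B c' x = lc n b c x" by auto
  show ?case
  proof (cases "\<exists>d. AE x in M. b n x = lc m B d x")
    case True
    then obtain d where d: "AE x in M. b n x = lc m B d x" by auto
    have "\<forall>c. \<exists>c'. AE x in M. lc (Suc n) b c x = lc m B c' x"
    proof
      fix c
      obtain c1 where c1: "AE x in M. lc n b c x = lc m B c1 x" using fw by blast
      have "AE x in M. lc (Suc n) b c x = lc m B (\<lambda>a. c1 a + c n * d a) x"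
        using c1 d by eventually_elim (simp add: lc_Suc lc_add lc_scale)
      then show "\<exists>c'. AE x in M. lc (Suc n) b c x = lc m B c' x" by blast
    qed
    moreover have "\<forall>c'. \<exists>c. AE x in M. lc m B c' x = lc (Suc n) b c x"
    proof
      fix c'
      obtain c where c: "AE x in M. lc m B c' x = lc n b c x" using bw by blast
      have "AE x in M. lc m B c' x = lc (Suc n) b (c(n := 0)) x"
        using c by eventually_elim (simp add: lc_Suc, intro lc_cong, auto)
      then show "\<exists>c. AE x in M. lc m B c' x = lc (Suc n) b c x" by blast
    qed
    ultimately show ?thesis using B by blast
  next
    case False
    define B' where "B' = B(m := b n)"
    have lcB': "lc (Suc m) B' c x = lc m B c x + c m * b n x" for c x
      by (simp add: lc_Suc B'_def, intro lc_cong, auto)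
    have "\<forall>a<Suc m. B' a \<in> Linf M" using B Suc.prems by (auto simp: B'_def less_Suc_eq)
    moreover have "indep M (Suc m) B'"
      unfolding indep_def
    proof (rule allI, rule impI)
      fix c assume h: "AE x in M. lc (Suc m) B' c x = 0"
      have cm: "c m = 0"
      proof (rule ccontr)
        assume nz: "c m \<noteq> 0"
        have "AE x in M. b n x = lc m B (\<lambda>a. (- 1 / c m) * c a) x"
          using h
        proof eventually_elim
          case (elim x)
          have "lc m B (\<lambda>a. (- 1 / c m) * c a) x = (- 1 / c m) * lc m B c x" by (rule lc_scale)
          moreover have "lc m B c x + c m * b n x = 0" using elim by (simp add: lcB')
          ultimately have "c m * b n x = c m * lc m B (\<lambda>a. (- 1 / c m) * c a) x" using nz by simp
          then show ?case using nz by simp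
        qed
        then show False using False by blast
      qed
      have "AE x in M. lc m B c x = 0" using h by eventually_elim (simp add: lcB' cm)
      then have "\<forall>a<m. c a = 0" using B(2) unfolding indep_def by blast
      then show "\<forall>a<Suc m. c a = 0" using cm by (auto simp: less_Suc_eq)
    qed
    moreover have "\<forall>c. \<exists>c'. AE x in M. lc (Suc n) b c x = lc (Suc m) B' c' x"
    proof
      fix c
      obtain c1 where c1: "AE x in M. lc n b c x = lc m B c1 x" using fw by blast
      have "AE x in M. lc (Suc n) b c x = lc (Suc m) B' (c1(m := c n)) x"
      proof -
        have e: "lc m B (c1(m := c n)) x = lc m B c1 x" for x by (intro lc_cong) auto
        show ?thesis using c1 by eventually_elim (simp only: lcB', simp add: lc_Suc e)
      qed
      then show "\<exists>c'. AE x in M. lc (Suc n) b c x = lc (Suc m) B' c' x" by blast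
    qed
    moreover have "\<forall>c'. \<exists>c. AE x in M. lc (Suc m) B' c' x = lc (Suc n) b c x"
    proof
      fix c'
      obtain c where c: "AE x in M. lc m B c' x = lc n b c x" using bw by blast
      have "AE x in M. lc (Suc m) B' c' x = lc (Suc n) b (c(n := c' m)) x"
      proof -
        have e: "lc n b (c(n := c' m)) x = lc n b c x" for x by (intro lc_cong) auto
        show ?thesis using c by eventually_elim (simp only: lcB', simp add: lc_Suc e)
      qed
      then show "\<exists>c. AE x in M. lc (Suc m) B' c' x = lc (Suc n) b c x" by blast
    qed
    ultimately show ?thesis by blast
  qed
qed



lemma common_bound:
  fixes m :: nat and B :: "nat \<Rightarrow> 'a \<Rightarrow> real"
  assumes "\<And>a. a < m \<Longrightarrow> B a \<in> Linf M"
  shows "\<exists>C. AE x in M. \<forall>a<m. \<bar>B a x\<bar> \<le> C"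
  using assms
proof (induction m)
  case 0 then show ?case by auto
next
  case (Suc m)
  then obtain C where C: "AE x in M. \<forall>a<m. \<bar>B a x\<bar> \<le> C" by auto
  obtain D where D: "AE x in M. \<bar>B m x\<bar> \<le> D" using Suc.prems[of m] unfolding Linf_def by auto
  have "AE x in M. \<forall>a<Suc m. \<bar>B a x\<bar> \<le> max C D"
    using C D by eventually_elim (auto simp: less_Suc_eq)
  then show ?case by blast
qed

lemma lc_bound:
  assumes "\<forall>a<m. \<bar>B a x\<bar> \<le> C" "\<forall>a<m. \<bar>c a\<bar> \<le> R"
  shows "\<bar>lc m B c x\<bar> \<le> m * (R * C)"
proof -
  have "\<bar>lc m B c x\<bar> \<le> (\<Sum>a<m. \<bar>c a * B a x\<bar>)" unfolding lc_def by (rule sum_abs)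
  also have "\<dots> \<le> (\<Sum>a<m. R * C)"
  proof (intro sum_mono)
    fix a assume "a \<in> {..<m}"
    then have "\<bar>c a\<bar> * \<bar>B a x\<bar> \<le> R * C" using assms by (intro mult_mono) auto
    then show "\<bar>c a * B a x\<bar> \<le> R * C" by (simp add: abs_mult)
  qed
  also have "\<dots> = m * (R * C)" by simp
  finally show ?thesis .
qed

lemma abs_sq_bound: "\<bar>t\<bar> \<le> K \<Longrightarrow> \<bar>t\<^sup>2\<bar> \<le> K\<^sup>2" for t K :: real
  by (metis abs_ge_zero abs_power2 order_trans power2_abs power_mono)

lemma lam_bound:
  assumes fm: "finite_measure M" and mpos: "m > 0" and BL: "\<And>a. a < m \<Longrightarrow> B a \<in> Linf M"
    and ind: "indep M m B"
  shows "\<exists>l>0. \<forall>c. l * (\<Sum>a<m. (c a)\<^sup>2) \<le> (\<integral>x. (lc m B c x)\<^sup>2 \<partial>M)"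
proof -
  define G where "G = (\<lambda>c. \<integral>x. (lc m B c x)\<^sup>2 \<partial>M)"
  define box where "box = Pi UNIV (\<lambda>a::nat. if a < m then {-1..1::real} else {0})"
  define S1 where "S1 = box \<inter> {c. (\<Sum>a<m. (c a)\<^sup>2) = 1}"
  have Lin: "(\<lambda>x. (lc m B c x)\<^sup>2) \<in> Linf M" for c by (intro Linf_power2 lc_Linf BL)
  have Gnn: "G c \<ge> 0" for c unfolding G_def by simp
  have cbox: "compact box" unfolding box_def by (intro compact_box) auto
  have "closed {c::nat\<Rightarrow>real. (\<Sum>a<m. (c a)\<^sup>2) = 1}"
    by (intro closed_Collect_eq continuous_intros)
  then have cS1: "compact S1" unfolding S1_def using cbox by blast
  define e0 where "e0 = (\<lambda>a::nat. if a = 0 then 1 else (0::real))"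
  have "(\<Sum>a<m. (e0 a)\<^sup>2) = (\<Sum>a<m. if a = 0 then 1 else 0)" by (intro sum.cong) (auto simp: e0_def)
  also have "\<dots> = 1" using mpos by simp
  finally have "e0 \<in> S1" using mpos by (auto simp: S1_def box_def e0_def)
  then have ne: "S1 \<noteq> {}" by auto
  obtain C where C: "AE x in M. \<forall>a<m. \<bar>B a x\<bar> \<le> C" using common_bound BL by blast
  have contG: "continuous_on box G" unfolding G_def
  proof (rule cont_integral[where C="(m * (1 * C))\<^sup>2"])
    show "finite_measure M" by fact
    show "(\<lambda>x. (lc m B c x)\<^sup>2) \<in> borel_measurable M" for c using Lin Linf_meas by blast
    show "AE x in M. \<forall>c\<in>box. \<bar>(lc m B c x)\<^sup>2\<bar> \<le> (m * (1 * C))\<^sup>2"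
      using C
    proof eventually_elim
      case (elim x)
      show ?case
      proof
        fix c assume "c \<in> box"
        then have "\<forall>a<m. \<bar>c a\<bar> \<le> 1"
        proof (intro allI impI)
          fix a assume "c \<in> box" "a < m"
          then have "c a \<in> {-1..1}" unfolding box_def Pi_iff by (metis UNIV_I)
          then show "\<bar>c a\<bar> \<le> 1" by auto
        qed
        then show "\<bar>(lc m B c x)\<^sup>2\<bar> \<le> (m * (1 * C))\<^sup>2"
          using elim by (intro abs_sq_bound lc_bound) auto
      qed
    qed
    show "continuous_on box (\<lambda>c. (lc m B c x)\<^sup>2)" for x
      unfolding lc_def by (intro continuous_intros)
  qed
  then have "continuous_on S1 G" by (rule continuous_on_subset) (auto simp: S1_def)
  then obtain c0 where c0: "c0 \<in> S1" and min: "\<forall>c\<in>S1. G c0 \<le> G c"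
    using continuous_attains_inf[OF cS1 ne] by blast
  have "G c0 \<noteq> 0"
  proof
    assume "G c0 = 0"
    then have "AE x in M. (lc m B c0 x)\<^sup>2 = 0"
      unfolding G_def using integral_nonneg_eq_0_iff_AE[OF Linf_integrable[OF fm Lin]] by simp
    then have "AE x in M. lc m B c0 x = 0" by simp
    then have "\<forall>a<m. c0 a = 0" using ind unfolding indep_def by blast
    then have "(\<Sum>a<m. (c0 a)\<^sup>2) = 0" by simp
    then show False using c0 by (simp add: S1_def)
  qed
  then have lpos: "G c0 > 0" using Gnn[of c0] by simp
  have "G c0 * (\<Sum>a<m. (c a)\<^sup>2) \<le> G c" for c
  proof (cases "(\<Sum>a<m. (c a)\<^sup>2) = 0")
    case True then show ?thesis using Gnn by simp
  next
    case False
    define t where "t = (\<Sum>a<m. (c a)\<^sup>2)"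
    have tpos: "t > 0" using False by (simp add: t_def order_le_neq_trans[OF sum_nonneg] )
    define c' where "c' = (\<lambda>a. if a < m then c a / sqrt t else 0)"
    have "c' \<in> S1"
    proof -
      have "\<bar>c a\<bar> \<le> sqrt t" if "a < m" for a
      proof -
        have "(c a)\<^sup>2 \<le> t" unfolding t_def using that by (intro member_le_sum) auto
        then show ?thesis using real_sqrt_le_mono by fastforce
      qed
      then have "\<bar>c a\<bar> / sqrt t \<le> 1" if "a < m" for a using tpos that by (simp add: divide_le_eq_1)
      then have "\<bar>c' a\<bar> \<le> 1" if "a < m" for a using tpos that by (simp add: c'_def abs_divide)
      have "c' a \<in> (if a < m then {-1..1} else {0})" for a
      proof (cases "a < m")
        case True
        then have "\<bar>c' a\<bar> \<le> 1" by fact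
        then show ?thesis using True by (simp only: if_True atLeastAtMost_iff abs_le_iff) auto
      qed (simp add: c'_def)
      then have "c' \<in> box" unfolding box_def Pi_iff by blast
      moreover have "(\<Sum>a<m. (c' a)\<^sup>2) = 1"
      proof -
        have "(\<Sum>a<m. (c' a)\<^sup>2) = (\<Sum>a<m. (c a)\<^sup>2 / t)"
          using tpos by (intro sum.cong) (auto simp: c'_def power_divide)
        also have "\<dots> = 1" using tpos by (simp add: sum_divide_distrib[symmetric] t_def)
        finally show ?thesis .
      qed
      ultimately show ?thesis by (simp add: S1_def)
    qed
    then have "G c0 \<le> G c'" using min by blast
    also have "G c' = G c / t"
    proof -
      have "lc m B c' x = (1 / sqrt t) * lc m B c x" for x
      proof -
        have "lc m B c' x = lc m B (\<lambda>a. (1 / sqrt t) * c a) x" by (intro lc_cong) (auto simp: c'_def)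
        then show ?thesis using lc_scale[of m B "1 / sqrt t" c x] by simp
      qed
      then have "(lc m B c' x)\<^sup>2 = (lc m B c x)\<^sup>2 / t" for x using tpos by (simp add: power_mult_distrib power_divide)
      then show ?thesis unfolding G_def by simp
    qed
    finally show ?thesis using tpos by (simp add: t_def field_simps)
  qed
  then show ?thesis using lpos unfolding G_def by blast
qed



lemma lagrange_id:
  fixes a b :: "nat \<Rightarrow> real"
  assumes "finite J"
  shows "(\<Sum>j\<in>J. \<Sum>k\<in>J. (a j * b k - a k * b j)\<^sup>2)
       = 2 * ((\<Sum>j\<in>J. (a j)\<^sup>2) * (\<Sum>j\<in>J. (b j)\<^sup>2) - (\<Sum>j\<in>J. a j * b j)\<^sup>2)"
proof -
  have e: "(a j * b k - a k * b j)\<^sup>2 = (a j)\<^sup>2 * (b k)\<^sup>2 + (a k)\<^sup>2 * (b j)\<^sup>2 - 2 * ((a j * b j) * (a k * b k))" for j k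
    by (simp add: power2_eq_square algebra_simps)
  have s1: "(\<Sum>j\<in>J. \<Sum>k\<in>J. (a j)\<^sup>2 * (b k)\<^sup>2) = (\<Sum>j\<in>J. (a j)\<^sup>2) * (\<Sum>j\<in>J. (b j)\<^sup>2)"
    by (simp add: sum_product)
  have s2: "(\<Sum>j\<in>J. \<Sum>k\<in>J. (a k)\<^sup>2 * (b j)\<^sup>2) = (\<Sum>j\<in>J. (a j)\<^sup>2) * (\<Sum>j\<in>J. (b j)\<^sup>2)"
    by (subst sum.swap) (simp add: sum_product)
  have s3: "(\<Sum>j\<in>J. \<Sum>k\<in>J. (a j * b j) * (a k * b k)) = (\<Sum>j\<in>J. a j * b j)\<^sup>2"
    by (simp add: sum_product power2_eq_square)
  show ?thesis
  proof -
    have "(\<Sum>j\<in>J. \<Sum>k\<in>J. (a j * b k - a k * b j)\<^sup>2)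
      = (\<Sum>j\<in>J. \<Sum>k\<in>J. (a j)\<^sup>2 * (b k)\<^sup>2) + (\<Sum>j\<in>J. \<Sum>k\<in>J. (a k)\<^sup>2 * (b j)\<^sup>2)
        - 2 * (\<Sum>j\<in>J. \<Sum>k\<in>J. (a j * b j) * (a k * b k))"
      unfolding e by (simp only: sum_subtractf sum.distrib sum_distrib_left)
    then show ?thesis unfolding s1 s2 s3 by simp
  qed
qed

lemma sos_reduce:
  fixes c :: "nat \<Rightarrow> nat \<Rightarrow> real" and J :: "nat set"
  assumes "finite J"
  shows "\<exists>e. \<forall>y. (\<Sum>j\<in>J. (\<Sum>a<m. c j a * y a)\<^sup>2) = (\<Sum>i<m. (\<Sum>a<m. e i a * y a)\<^sup>2)"
  using assms
proof (induction m arbitrary: J c)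
  case 0 then show ?case by simp
next
  case (Suc m)
  define \<alpha> where "\<alpha> = (\<Sum>j\<in>J. (c j m)\<^sup>2)"
  have \<alpha>0: "\<alpha> \<ge> 0" by (simp add: \<alpha>_def sum_nonneg)
  show ?case
  proof (cases "\<alpha> = 0")
    case True
    have cz: "\<forall>j\<in>J. c j m = 0" using True Suc.prems unfolding \<alpha>_def by (simp add: sum_nonneg_eq_0_iff)
    obtain ee where ee: "\<forall>y. (\<Sum>j\<in>J. (\<Sum>a<m. c j a * y a)\<^sup>2) = (\<Sum>i<m. (\<Sum>a<m. ee i a * y a)\<^sup>2)"
      using Suc.IH[OF Suc.prems] by blast
    define e where "e = (\<lambda>i a. if i < m \<and> a < m then ee i a else (0::real))"
    have "(\<Sum>j\<in>J. (\<Sum>a<Suc m. c j a * y a)\<^sup>2) = (\<Sum>i<Suc m. (\<Sum>a<Suc m. e i a * y a)\<^sup>2)" for y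
    proof -
      have "(\<Sum>j\<in>J. (\<Sum>a<Suc m. c j a * y a)\<^sup>2) = (\<Sum>j\<in>J. (\<Sum>a<m. c j a * y a)\<^sup>2)"
        using cz by (intro sum.cong) auto
      also have "\<dots> = (\<Sum>i<m. (\<Sum>a<m. ee i a * y a)\<^sup>2)" using ee by blast
      also have "\<dots> = (\<Sum>i<m. (\<Sum>a<Suc m. e i a * y a)\<^sup>2)"
      proof (intro sum.cong refl)
        fix i assume i: "i \<in> {..<m}"
        have "(\<Sum>a<Suc m. e i a * y a) = (\<Sum>a<m. e i a * y a)" by (simp add: e_def)
        also have "\<dots> = (\<Sum>a<m. ee i a * y a)" using i by (intro sum.cong) (auto simp: e_def)
        finally show "(\<Sum>a<m. ee i a * y a)\<^sup>2 = (\<Sum>a<Suc m. e i a * y a)\<^sup>2" by simp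
      qed
      also have "\<dots> = (\<Sum>i<Suc m. (\<Sum>a<Suc m. e i a * y a)\<^sup>2)" by (simp add: e_def)
      finally show ?thesis .
    qed
    then show ?thesis by blast
  next
    case False
    then have \<alpha>p: "\<alpha> > 0" using \<alpha>0 by simp
    define s where "s = sqrt \<alpha>"
    have s2: "s * s = \<alpha>" "s > 0" using \<alpha>p by (auto simp: s_def)
    define \<beta> where "\<beta> = (\<lambda>a. \<Sum>j\<in>J. c j m * c j a)"
    define JJ where "JJ = prod_encode ` (J \<times> J)"
    define r where "r = sqrt (2*\<alpha>)"
    have r2: "r\<^sup>2 = 2 * \<alpha>" using \<alpha>p by (simp add: r_def)
    define cc where "cc = (\<lambda>t a. (c (fst (prod_decode t)) m * c (snd (prod_decode t)) a - c (snd (prod_decode t)) m * c (fst (prod_decode t)) a) / r)"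
    obtain ee where ee: "\<forall>y. (\<Sum>t\<in>JJ. (\<Sum>a<m. cc t a * y a)\<^sup>2) = (\<Sum>i<m. (\<Sum>a<m. ee i a * y a)\<^sup>2)"
      using Suc.IH[of JJ cc] Suc.prems by (auto simp: JJ_def)
    define e where "e = (\<lambda>i a. if i < m then (if a < m then ee i a else 0) else if a < m then \<beta> a / s else if a = m then s else 0)"
    have main: "(\<Sum>j\<in>J. (\<Sum>a<Suc m. c j a * y a)\<^sup>2) = (\<Sum>i<Suc m. (\<Sum>a<Suc m. e i a * y a)\<^sup>2)" for y
    proof -
      define L where "L = (\<lambda>j. \<Sum>a<m. c j a * y a)"
      define bY where "bY = (\<Sum>a<m. \<beta> a * y a)"
      have hL: "(\<Sum>a<Suc m. c j a * y a) = L j + c j m * y m" for j by (simp add: L_def)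
      have hcL: "(\<Sum>j\<in>J. c j m * L j) = bY"
      proof -
        have "(\<Sum>j\<in>J. c j m * L j) = (\<Sum>j\<in>J. \<Sum>a<m. c j m * c j a * y a)"
          unfolding L_def by (simp add: sum_distrib_left mult.assoc)
        also have "\<dots> = (\<Sum>a<m. \<Sum>j\<in>J. c j m * c j a * y a)" by (rule sum.swap)
        also have "\<dots> = bY" unfolding bY_def \<beta>_def by (simp add: sum_distrib_right)
        finally show ?thesis .
      qed
      have sq: "(L j + c j m * y m)\<^sup>2 = (L j)\<^sup>2 + 2 * y m * (c j m * L j) + (y m)\<^sup>2 * (c j m)\<^sup>2" for j
        by algebra
      have lhs: "(\<Sum>j\<in>J. (\<Sum>a<Suc m. c j a * y a)\<^sup>2) = (\<Sum>j\<in>J. (L j)\<^sup>2) + 2 * y m * bY + (y m)\<^sup>2 * \<alpha>"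
        unfolding hL sq by (simp add: sum.distrib sum_distrib_left[symmetric] hcL \<alpha>_def)
      have rowm: "(\<Sum>a<Suc m. e m a * y a) = s * y m + bY / s"
        by (simp add: e_def bY_def sum_divide_distrib)
      have rows: "(\<Sum>i<m. (\<Sum>a<Suc m. e i a * y a)\<^sup>2) = (\<Sum>i<m. (\<Sum>a<m. ee i a * y a)\<^sup>2)"
      proof (intro sum.cong refl)
        fix i assume i: "i \<in> {..<m}"
        have "(\<Sum>a<Suc m. e i a * y a) = (\<Sum>a<m. e i a * y a)" using i by (simp add: e_def)
        also have "\<dots> = (\<Sum>a<m. ee i a * y a)" using i by (intro sum.cong) (auto simp: e_def)
        finally show "(\<Sum>a<Suc m. e i a * y a)\<^sup>2 = (\<Sum>a<m. ee i a * y a)\<^sup>2" by simp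
      qed
      have ccsum: "(\<Sum>a<m. cc (prod_encode (j,k)) a * y a) = (c j m * L k - c k m * L j) / r" for j k
      proof -
        have "(\<Sum>a<m. cc (prod_encode (j,k)) a * y a) = (\<Sum>a<m. (c j m * (c k a * y a) - c k m * (c j a * y a)) / r)"
          by (intro sum.cong) (auto simp: cc_def algebra_simps)
        also have "\<dots> = (c j m * L k - c k m * L j) / r"
          unfolding L_def sum_divide_distrib[symmetric] sum_subtractf sum_distrib_left[symmetric] ..
        finally show ?thesis .
      qed
      have JJsum: "(\<Sum>t\<in>JJ. (\<Sum>a<m. cc t a * y a)\<^sup>2) = (\<Sum>j\<in>J. \<Sum>k\<in>J. (c j m * L k - c k m * L j)\<^sup>2) / (2*\<alpha>)"
      proof -
        have inj: "inj_on prod_encode (J \<times> J)" using inj_prod_encode inj_on_subset by blast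
        have "(\<Sum>t\<in>JJ. (\<Sum>a<m. cc t a * y a)\<^sup>2) = (\<Sum>p\<in>J \<times> J. (\<Sum>a<m. cc (prod_encode p) a * y a)\<^sup>2)"
          unfolding JJ_def using inj by (simp add: sum.reindex)
        also have "\<dots> = (\<Sum>j\<in>J. \<Sum>k\<in>J. (\<Sum>a<m. cc (prod_encode (j,k)) a * y a)\<^sup>2)"
          by (simp add: sum.cartesian_product)
        also have "\<dots> = (\<Sum>j\<in>J. \<Sum>k\<in>J. (c j m * L k - c k m * L j)\<^sup>2 / (2*\<alpha>))"
          by (simp add: ccsum power_divide r2)
        also have "\<dots> = (\<Sum>j\<in>J. \<Sum>k\<in>J. (c j m * L k - c k m * L j)\<^sup>2) / (2*\<alpha>)"
          by (simp add: sum_divide_distrib)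
        finally show ?thesis .
      qed
      have lag: "(\<Sum>j\<in>J. \<Sum>k\<in>J. (c j m * L k - c k m * L j)\<^sup>2) = 2 * (\<alpha> * (\<Sum>j\<in>J. (L j)\<^sup>2) - bY\<^sup>2)"
        using lagrange_id[OF Suc.prems, of "\<lambda>j. c j m" L] by (simp add: \<alpha>_def hcL)
      have "(\<Sum>i<Suc m. (\<Sum>a<Suc m. e i a * y a)\<^sup>2) = (\<Sum>i<m. (\<Sum>a<Suc m. e i a * y a)\<^sup>2) + (\<Sum>a<Suc m. e m a * y a)\<^sup>2"
        by simp
      also have "\<dots> = (\<alpha> * (\<Sum>j\<in>J. (L j)\<^sup>2) - bY\<^sup>2) / \<alpha> + (s * y m + bY / s)\<^sup>2"
        unfolding rows rowm ee[rule_format, symmetric] JJsum lag using \<alpha>p by (simp add: field_simps)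
      also have "\<dots> = (\<Sum>j\<in>J. (L j)\<^sup>2) + 2 * y m * bY + (y m)\<^sup>2 * \<alpha>"
        using s2(2) unfolding s2(1)[symmetric] by (simp add: field_simps power2_eq_square)
      finally show ?thesis using lhs by simp
    qed
    then show ?thesis by blast
  qed
qed



lemma lim_nonneg:
  fixes A H :: real
  assumes h: "\<And>\<epsilon>. 0 < \<epsilon> \<Longrightarrow> \<epsilon> < 1 \<Longrightarrow> 0 \<le> 2*A + \<epsilon>*H"
  shows "0 \<le> A"
proof (rule ccontr)
  assume "\<not> 0 \<le> A"
  then have An: "A < 0" by simp
  define \<epsilon> where "\<epsilon> = min (1/2) (-A / (\<bar>H\<bar>+1))"
  have "-A / (\<bar>H\<bar>+1) > 0" using An by (intro divide_pos_pos) auto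
  then have ep: "0 < \<epsilon>" "\<epsilon> < 1" by (auto simp: \<epsilon>_def)
  have "\<epsilon> * H \<le> \<epsilon> * \<bar>H\<bar>" using ep by (intro mult_left_mono) auto
  also have "\<dots> \<le> (-A / (\<bar>H\<bar>+1)) * \<bar>H\<bar>" by (intro mult_right_mono) (auto simp: \<epsilon>_def)
  also have "\<dots> \<le> -A"
  proof -
    have "(-A / (\<bar>H\<bar>+1)) * \<bar>H\<bar> = -A * (\<bar>H\<bar> / (\<bar>H\<bar>+1))" by simp
    also have "\<dots> \<le> -A * 1" using An by (intro mult_left_mono) auto
    finally show ?thesis by simp
  qed
  finally have "2*A + \<epsilon>*H < 0" using An by linarith
  then show False using h[OF ep] by linarith
qed

lemma core:
  fixes M :: "'a measure" and m :: nat and B :: "nat \<Rightarrow> 'a \<Rightarrow> real"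
  assumes fm: "finite_measure M" and pos: "emeasure M (space M) > 0" and mpos: "m > 0"
    and BL: "\<And>a. a < m \<Longrightarrow> B a \<in> Linf M" and ind: "indep M m B"
    and noSOS: "\<not>(\<exists>(k::nat) fs. (\<forall>j<k. \<exists>c. fs j = lc m B c) \<and> (AE x in M. (\<Sum>j<k. (fs j x)\<^sup>2) = 1))"
  shows "\<exists>u\<in>Linf_star M. \<forall>c. nonzero_ae M (lc m B c) \<longrightarrow> quad_form M u (lc m B c) > 0"
proof -
  have I: "\<And>f. f \<in> Linf M \<Longrightarrow> integrable M f" using Linf_integrable[OF fm] .
  have LB: "lc m B c \<in> Linf M" for c using lc_Linf[OF BL] .
  have LB2: "(\<lambda>x. (lc m B c x)\<^sup>2) \<in> Linf M" for c using Linf_power2[OF LB] .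
  define G where "G = (\<lambda>c. \<integral>x. (lc m B c x)\<^sup>2 \<partial>M)"
  obtain l where l: "l > 0" "\<And>c. l * (\<Sum>a<m. (c a)\<^sup>2) \<le> G c"
    using lam_bound[OF fm mpos BL ind] unfolding G_def by auto
  have Gnn: "0 \<le> G c" for c unfolding G_def by simp
  define sq where "sq = (\<lambda>(d::nat \<Rightarrow> nat \<Rightarrow> real) x. \<Sum>i<m. (lc m B (d i) x)\<^sup>2)"
  have sqL: "sq d \<in> Linf M" for d
  proof -
    have "(\<lambda>x. \<Sum>i<m. (lc m B (d i) x)\<^sup>2) \<in> Linf M" by (intro Linf_sum LB2)
    then show ?thesis by (simp add: sq_def)
  qed
  have intsq: "(\<integral>x. sq d x \<partial>M) = (\<Sum>i<m. G (d i))" for d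
    unfolding sq_def G_def using Bochner_Integration.integral_sum[where f="\<lambda>i x. (lc m B (d i) x)\<^sup>2" and I="{..<m}"] I[OF LB2] by simp
  define V where "V = measure M (space M)"
  have Vpos: "V > 0"
    using pos finite_measure.emeasure_eq_measure[OF fm] unfolding V_def
    by (metis ennreal_less_zero_iff)
  define k0 where "k0 = 1 / V"
  define R where "R = sqrt (1 / l)"
  define box where "box = Pi UNIV (\<lambda>i::nat. Pi UNIV (\<lambda>a::nat. if i < m \<and> a < m then {-R..R} else {0::real}))"
  define D where "D = {d \<in> box. (\<integral>x. sq d x \<partial>M) = 1}"
  have box_coord: "\<bar>d i a\<bar> \<le> R" if "d \<in> box" "i < m" "a < m" for d i a
  proof -
    have "d i \<in> Pi UNIV (\<lambda>a::nat. if i < m \<and> a < m then {-R..R} else {0::real})"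
      using that(1) unfolding box_def Pi_iff by blast
    then have "d i a \<in> {-R..R}" using that unfolding Pi_iff by (metis UNIV_I)
    then show ?thesis by auto
  qed
  have inD: "d \<in> D" if supp: "\<And>i a. \<not>(i<m \<and> a<m) \<Longrightarrow> d i a = 0" and one: "(\<integral>x. sq d x \<partial>M) = 1" for d
  proof -
    have bnd: "\<bar>d i a\<bar> \<le> R" if "i<m" "a<m" for i a
    proof -
      have "(d i a)\<^sup>2 \<le> (\<Sum>a<m. (d i a)\<^sup>2)" by (rule member_le_sum) (use that in auto)
      then have "l * (d i a)\<^sup>2 \<le> G (d i)" using l by (meson mult_left_mono less_imp_le order_trans)
      also have "G (d i) \<le> (\<Sum>i<m. G (d i))" by (rule member_le_sum) (use that Gnn in auto)
      also have "\<dots> = 1" using one intsq by simp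
      finally have "(d i a)\<^sup>2 \<le> 1 / l" using l by (simp add: field_simps)
      then have "sqrt ((d i a)\<^sup>2) \<le> R" unfolding R_def by (rule real_sqrt_le_mono)
      then show ?thesis by simp
    qed
    have "d i \<in> Pi UNIV (\<lambda>a::nat. if i < m \<and> a < m then {-R..R} else {0::real})" for i
      unfolding Pi_iff
    proof
      fix a
      show "d i a \<in> (if i < m \<and> a < m then {-R..R} else {0})"
      proof (cases "i < m \<and> a < m")
        case True
        then have "\<bar>d i a\<bar> \<le> R" using bnd by auto
        then show ?thesis using True by (simp only: if_True atLeastAtMost_iff abs_le_iff) auto
      qed (use supp in auto)
    qed
    then have "d \<in> box" unfolding box_def Pi_iff by blast
    then show ?thesis using one by (simp add: D_def)
  qed
  obtain C where C: "AE x in M. \<forall>a<m. \<bar>B a x\<bar> \<le> C" using common_bound BL by blast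
  define K where "K = m * (m * (R * C))\<^sup>2"
  have sqbound: "\<bar>sq d x\<bar> \<le> K" if bx: "\<forall>a<m. \<bar>B a x\<bar> \<le> C" and d: "d \<in> box" for d x
  proof -
    have "\<bar>(lc m B (d i) x)\<^sup>2\<bar> \<le> (m * (R * C))\<^sup>2" if "i < m" for i
      using box_coord[OF d that] bx by (intro abs_sq_bound lc_bound) auto
    then have "(\<Sum>i<m. \<bar>(lc m B (d i) x)\<^sup>2\<bar>) \<le> (\<Sum>i<m. (m * (R * C))\<^sup>2)"
      by (intro sum_mono) auto
    then have "\<bar>sq d x\<bar> \<le> (\<Sum>i<m. (m * (R * C))\<^sup>2)" unfolding sq_def
      by (rule order_trans[OF sum_abs])
    then show ?thesis by (simp add: K_def)
  qed
  have cbox: "compact box" unfolding box_def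
    by (intro compact_box) auto
  have cont_isq: "continuous_on box (\<lambda>d. \<integral>x. sq d x \<partial>M)"
  proof (rule cont_integral[where C=K])
    show "finite_measure M" by fact
    show "sq d \<in> borel_measurable M" for d using sqL Linf_meas by blast
    show "AE x in M. \<forall>d\<in>box. \<bar>sq d x\<bar> \<le> K" using C by eventually_elim (use sqbound in blast)
    show "continuous_on box (\<lambda>d. sq d x)" for x
      unfolding sq_def lc_def by (intro continuous_intros)
  qed
  define F where "F = (\<lambda>d. \<integral>x. (sq d x - k0)\<^sup>2 \<partial>M)"
  have contF: "continuous_on box F" unfolding F_def
  proof (rule cont_integral[where C="(K + \<bar>k0\<bar>)\<^sup>2"])
    show "finite_measure M" by fact
    show "(\<lambda>x. (sq d x - k0)\<^sup>2) \<in> borel_measurable M" for d using sqL Linf_meas by measurable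
    show "AE x in M. \<forall>d\<in>box. \<bar>(sq d x - k0)\<^sup>2\<bar> \<le> (K + \<bar>k0\<bar>)\<^sup>2" using C
    proof eventually_elim
      case (elim x)
      show ?case
      proof
        fix d assume "d \<in> box"
        then have "\<bar>sq d x\<bar> \<le> K" using sqbound elim by blast
        then have "\<bar>sq d x - k0\<bar> \<le> K + \<bar>k0\<bar>" by linarith
        then show "\<bar>(sq d x - k0)\<^sup>2\<bar> \<le> (K + \<bar>k0\<bar>)\<^sup>2" by (rule abs_sq_bound)
      qed
    qed
    show "continuous_on box (\<lambda>d. (sq d x - k0)\<^sup>2)" for x
      unfolding sq_def lc_def by (intro continuous_intros)
  qed
  have "closed D" unfolding D_def
    by (rule continuous_closed_preimage_constant[OF cont_isq compact_imp_closed[OF cbox]])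
  then have cD: "compact D"
    using compact_Int_closed[OF cbox] by (metis D_def Collect_conj_eq Collect_mem_eq Int_absorb1 inf_le1)
  define c0 where "c0 = (\<lambda>a::nat. if a = 0 then 1 else (0::real))"
  have "(\<Sum>a<m. (c0 a)\<^sup>2) = (\<Sum>a<m. if a = 0 then 1 else 0)" by (intro sum.cong) (auto simp: c0_def)
  also have "\<dots> = 1" using mpos by simp
  finally have "l \<le> G c0" using l(2)[of c0] by simp
  then have gpos: "G c0 > 0" using l by simp
  define d0 where "d0 = (\<lambda>i::nat. if i = 0 then (\<lambda>a. (1 / sqrt (G c0)) * c0 a) else (\<lambda>a. 0))"
  have lcd0: "lc m B (d0 i) x = (if i = 0 then (1 / sqrt (G c0)) * lc m B c0 x else 0)" for i x
    by (cases "i = 0") (simp_all only: d0_def if_True if_False lc_scale, simp_all add: lc_def sum_divide_distrib)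
  have "sq d0 x = (\<Sum>i<m. if i = 0 then (lc m B c0 x)\<^sup>2 / G c0 else 0)" for x
    unfolding sq_def lcd0 using gpos by (intro sum.cong) (auto simp: power_mult_distrib power_divide)
  then have "sq d0 x = (lc m B c0 x)\<^sup>2 / G c0" for x using mpos by simp
  then have "(\<integral>x. sq d0 x \<partial>M) = 1" using gpos by (simp add: G_def)
  moreover have "\<not>(i<m \<and> a<m) \<Longrightarrow> d0 i a = 0" for i a using mpos by (auto simp: d0_def c0_def)
  ultimately have "d0 \<in> D" using inD by blast
  then have neD: "D \<noteq> {}" by auto
  have "continuous_on D F" using contF by (rule continuous_on_subset) (auto simp: D_def)
  then obtain ds where ds: "ds \<in> D" and dsmin: "\<forall>d\<in>D. F ds \<le> F d"
    using continuous_attains_inf[OF cD neD] by blast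
  define w where "w = (\<lambda>x. sq ds x - k0)"
  have wL: "w \<in> Linf M" unfolding w_def by (rule Linf_minus[OF sqL Linf_const])
  have ds1: "(\<integral>x. sq ds x \<partial>M) = 1" using ds by (simp add: D_def)
  have intc: "integrable M (\<lambda>x. k0)" using finite_measure.integrable_const[OF fm] .
  have intw: "(\<integral>x. w x \<partial>M) = 0"
  proof -
    have "(\<integral>x. w x \<partial>M) = (\<integral>x. sq ds x \<partial>M) - (\<integral>x. k0 \<partial>M)"
      unfolding w_def by (rule Bochner_Integration.integral_diff[OF I[OF sqL] intc])
    also have "\<dots> = 0" using ds1 Vpos by (simp add: V_def[symmetric] k0_def)
    finally show ?thesis .
  qed
  have wnz: "\<not> (AE x in M. w x = 0)"
  proof
    assume AE0: "AE x in M. w x = 0"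
    define fs where "fs = (\<lambda>i. lc m B (\<lambda>a. sqrt V * ds i a))"
    have "\<forall>j<m. \<exists>c. fs j = lc m B c" by (auto simp: fs_def)
    moreover have "AE x in M. (\<Sum>j<m. (fs j x)\<^sup>2) = 1" using AE0
    proof eventually_elim
      case (elim x)
      have "(fs j x)\<^sup>2 = V * (lc m B (ds j) x)\<^sup>2" for j
      proof -
        have "fs j x = sqrt V * lc m B (ds j) x" unfolding fs_def by (rule lc_scale)
        then show ?thesis using Vpos by (simp add: power_mult_distrib)
      qed
      then have "(\<Sum>j<m. (fs j x)\<^sup>2) = V * sq ds x" by (simp add: sq_def sum_distrib_left)
      also have "\<dots> = 1" using elim Vpos by (simp add: w_def k0_def)
      finally show ?case .
    qed
    ultimately have P: "(\<forall>j<m. \<exists>c. fs j = lc m B c) \<and> (AE x in M. (\<Sum>j<m. (fs j x)\<^sup>2) = 1)"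
      by (rule conjI)
    have "\<exists>(k::nat) fs. (\<forall>j<k. \<exists>c. fs j = lc m B c) \<and> (AE x in M. (\<Sum>j<k. (fs j x)\<^sup>2) = 1)"
      apply (rule exI[where x=m])
      apply (rule exI[where x=fs])
      by (rule P)
    then show False using noSOS by (rule notE[rotated])
  qed
  have wwL: "(\<lambda>x. (w x)\<^sup>2) \<in> Linf M" using Linf_power2[OF wL] .
  have ww: "(\<integral>x. (w x)\<^sup>2 \<partial>M) > 0"
  proof -
    have "(\<integral>x. (w x)\<^sup>2 \<partial>M) \<noteq> 0"
    proof
      assume "(\<integral>x. (w x)\<^sup>2 \<partial>M) = 0"
      then have "AE x in M. (w x)\<^sup>2 = 0" using integral_nonneg_eq_0_iff_AE[OF I[OF wwL]] by simp
      then have "AE x in M. w x = 0" by simp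
      then show False using wnz by blast
    qed
    moreover have "(\<integral>x. (w x)\<^sup>2 \<partial>M) \<ge> 0" by simp
    ultimately show ?thesis by linarith
  qed
  have var: "(\<integral>x. w x * (lc m B c x)\<^sup>2 \<partial>M) \<ge> (\<integral>x. (w x)\<^sup>2 \<partial>M)" if c1: "G c = 1" for c
  proof -
    define h where "h = (\<lambda>x. (lc m B c x)\<^sup>2 - sq ds x)"
    have hL: "h \<in> Linf M" unfolding h_def by (rule Linf_minus[OF LB2 sqL])
    have whL: "(\<lambda>x. w x * h x) \<in> Linf M" by (rule Linf_mult[OF wL hL])
    have hhL: "(\<lambda>x. (h x)\<^sup>2) \<in> Linf M" by (rule Linf_power2[OF hL])
    define A where "A = (\<integral>x. w x * h x \<partial>M)"
    define H where "H = (\<integral>x. (h x)\<^sup>2 \<partial>M)"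
    have key: "0 \<le> 2*A + \<epsilon>*H" if ep: "0 < \<epsilon>" "\<epsilon> < 1" for \<epsilon>
    proof -
      define cc where "cc = (\<lambda>j a. if j < m then sqrt (1-\<epsilon>) * ds j a else sqrt \<epsilon> * c a)"
      obtain e where e: "\<forall>y. (\<Sum>j\<in>{..<Suc m}. (\<Sum>a<m. cc j a * y a)\<^sup>2) = (\<Sum>i<m. (\<Sum>a<m. e i a * y a)\<^sup>2)"
        using sos_reduce[of "{..<Suc m}" cc m] by auto
      define e' where "e' = (\<lambda>i a. if i < m \<and> a < m then e i a else 0)"
      have sqe: "sq e' x = (1-\<epsilon>) * sq ds x + \<epsilon> * (lc m B c x)\<^sup>2" for x
      proof -
        have "sq e' x = (\<Sum>i<m. (\<Sum>a<m. e i a * B a x)\<^sup>2)"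
          unfolding sq_def lc_def e'_def by (intro sum.cong refl arg_cong[where f="\<lambda>t. t\<^sup>2"]) auto
        also have "\<dots> = (\<Sum>j<Suc m. (\<Sum>a<m. cc j a * B a x)\<^sup>2)" using e[rule_format, of "\<lambda>a. B a x"] by simp
        also have "\<dots> = (\<Sum>j<m. (\<Sum>a<m. cc j a * B a x)\<^sup>2) + (\<Sum>a<m. cc m a * B a x)\<^sup>2" by simp
        also have "(\<Sum>j<m. (\<Sum>a<m. cc j a * B a x)\<^sup>2) = (1-\<epsilon>) * sq ds x"
        proof -
          have "(\<Sum>a<m. cc j a * B a x)\<^sup>2 = (1-\<epsilon>) * (lc m B (ds j) x)\<^sup>2" if "j < m" for j
          proof -
            have "(\<Sum>a<m. cc j a * B a x) = sqrt (1-\<epsilon>) * lc m B (ds j) x"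
              using that by (simp add: cc_def lc_def sum_distrib_left mult.assoc)
            then show ?thesis using ep by (simp add: power_mult_distrib)
          qed
          then show ?thesis by (simp add: sq_def sum_distrib_left)
        qed
        also have "(\<Sum>a<m. cc m a * B a x)\<^sup>2 = \<epsilon> * (lc m B c x)\<^sup>2"
        proof -
          have "(\<Sum>a<m. cc m a * B a x) = sqrt \<epsilon> * lc m B c x"
            by (simp add: cc_def lc_def sum_distrib_left mult.assoc)
          then show ?thesis using ep by (simp add: power_mult_distrib)
        qed
        finally show ?thesis .
      qed
      have "(\<integral>x. sq e' x \<partial>M) = (1-\<epsilon>) * (\<integral>x. sq ds x \<partial>M) + \<epsilon> * G c"
        unfolding sqe G_def
        by (subst Bochner_Integration.integral_add) (auto intro!: I sqL LB2 Linf_mult[OF Linf_const])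
      then have "(\<integral>x. sq e' x \<partial>M) = 1" using ds1 c1 by simp
      moreover have "\<not>(i<m \<and> a<m) \<Longrightarrow> e' i a = 0" for i a by (auto simp: e'_def)
      ultimately have "e' \<in> D" using inD by blast
      then have le: "F ds \<le> F e'" using dsmin by blast
      have "F e' = (\<integral>x. (w x)\<^sup>2 + (2*\<epsilon>) * (w x * h x) + \<epsilon>\<^sup>2 * (h x)\<^sup>2 \<partial>M)"
        unfolding F_def sqe w_def h_def by (intro Bochner_Integration.integral_cong refl) (simp add: power2_eq_square algebra_simps)
      also have "\<dots> = (\<integral>x. (w x)\<^sup>2 \<partial>M) + 2*\<epsilon>*A + \<epsilon>\<^sup>2 * H"
        unfolding A_def H_def
        by (subst Bochner_Integration.integral_add, auto intro!: I wwL whL hhL Linf_add Linf_mult[OF Linf_const])+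
      finally have Fe: "F e' = (\<integral>x. (w x)\<^sup>2 \<partial>M) + 2*\<epsilon>*A + \<epsilon>\<^sup>2 * H" .
      have "F ds = (\<integral>x. (w x)\<^sup>2 \<partial>M)" by (simp add: F_def w_def)
      then have "0 \<le> \<epsilon> * (2*A + \<epsilon>*H)" using le Fe by (simp add: power2_eq_square algebra_simps)
      then show ?thesis using ep by (simp add: zero_le_mult_iff)
    qed
    have A0: "0 \<le> A" using lim_nonneg[of A H] key by blast
    have "A = (\<integral>x. w x * (lc m B c x)\<^sup>2 \<partial>M) - (\<integral>x. w x * sq ds x \<partial>M)"
      unfolding A_def h_def right_diff_distrib
      by (rule Bochner_Integration.integral_diff) (auto intro!: I Linf_mult wL LB2 sqL)
    moreover have "(\<integral>x. w x * sq ds x \<partial>M) = (\<integral>x. (w x)\<^sup>2 \<partial>M)"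
    proof -
      have "(\<integral>x. w x * sq ds x \<partial>M) = (\<integral>x. (w x)\<^sup>2 + k0 * w x \<partial>M)"
        by (intro Bochner_Integration.integral_cong refl) (simp add: w_def power2_eq_square algebra_simps)
      also have "\<dots> = (\<integral>x. (w x)\<^sup>2 \<partial>M) + k0 * (\<integral>x. w x \<partial>M)"
        by (subst Bochner_Integration.integral_add) (auto intro!: I wwL Linf_mult[OF Linf_const] wL)
      finally show ?thesis using intw by simp
    qed
    ultimately show ?thesis using A0 by simp
  qed
  show ?thesis
  proof (rule bexI[of _ w])
    show "w \<in> Linf_star M" using wL intw by (simp add: Linf_star_def)
    show "\<forall>c. nonzero_ae M (lc m B c) \<longrightarrow> quad_form M w (lc m B c) > 0"
    proof (intro allI impI)
      fix c assume nz: "nonzero_ae M (lc m B c)"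
      define t where "t = G c"
      have "t \<noteq> 0"
      proof
        assume "t = 0"
        then have "AE x in M. (lc m B c x)\<^sup>2 = 0"
          using integral_nonneg_eq_0_iff_AE[OF I[OF LB2]] by (simp add: t_def G_def)
        then have "AE x in M. lc m B c x = 0" by simp
        then show False using nz by (simp add: nonzero_ae_def)
      qed
      then have tpos: "t > 0" using Gnn[of c] by (simp add: t_def)
      define c' where "c' = (\<lambda>a. (1 / sqrt t) * c a)"
      have lc': "lc m B c' x = (1 / sqrt t) * lc m B c x" for x unfolding c'_def by (rule lc_scale)
      have "G c' = G c / t" unfolding G_def lc' using tpos by (simp add: power_mult_distrib power_divide)
      then have "G c' = 1" using tpos by (simp add: t_def)
      then have "(\<integral>x. w x * (lc m B c' x)\<^sup>2 \<partial>M) > 0" using var ww by (meson less_le_trans)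
      moreover have "(\<integral>x. w x * (lc m B c' x)\<^sup>2 \<partial>M) = (\<integral>x. w x * (lc m B c x)\<^sup>2 \<partial>M) / t"
        unfolding lc' using tpos by (simp add: power_mult_distrib power_divide)
      ultimately show "quad_form M w (lc m B c) > 0" using tpos
        by (simp add: quad_form_def divide_pos_pos zero_less_divide_iff)
    qed
  qed
qed



lemma fspan_lc: "f \<in> fspan n b \<longleftrightarrow> (\<exists>c. f = lc n b c)"
  unfolding fspan_def lc_def by auto

theorem lemma2p2:
  fixes M :: "'a measure" and n :: nat and b :: "nat \<Rightarrow> 'a \<Rightarrow> real"
  assumes "finite_measure M"
    and "emeasure M (space M) > 0"
    and "\<And>j. j < n \<Longrightarrow> b j \<in> Linf M"
    and "\<exists>f\<in>fspan n b. nonzero_ae M f"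
  shows "(\<forall>u\<in>Linf_star M. indefinite_on M (fspan n b) (quad_form M u))
     \<longleftrightarrow> (\<exists>(k::nat) fs. (\<forall>j<k. fs j \<in> fspan n b) \<and>
              (AE x in M. (\<Sum>j<k. (fs j x)\<^sup>2) = 1))"
proof -
  note fm = assms(1) and pos = assms(2) and bL = assms(3)
  have I: "\<And>f. f \<in> Linf M \<Longrightarrow> integrable M f" using Linf_integrable[OF fm] .
  have lcL: "lc n b c \<in> Linf M" for c by (rule lc_Linf) (rule bL)
  have spL: "f \<in> Linf M" if "f \<in> fspan n b" for f
    using that lcL unfolding fspan_lc by blast
  show ?thesis
  proof
    assume H: "\<forall>u\<in>Linf_star M. indefinite_on M (fspan n b) (quad_form M u)"
    show "\<exists>(k::nat) fs. (\<forall>j<k. fs j \<in> fspan n b) \<and> (AE x in M. (\<Sum>j<k. (fs j x)\<^sup>2) = 1)"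
    proof (rule ccontr)
      assume nS: "\<not> (\<exists>(k::nat) fs. (\<forall>j<k. fs j \<in> fspan n b) \<and> (AE x in M. (\<Sum>j<k. (fs j x)\<^sup>2) = 1))"
      obtain m B where BL: "\<forall>a<m. B a \<in> Linf M" and ind: "indep M m B"
        and fw: "\<forall>c. \<exists>c'. AE x in M. lc n b c x = lc m B c' x"
        and bw: "\<forall>c'. \<exists>c. AE x in M. lc m B c' x = lc n b c x"
        using reduce[of n b M] bL by blast
      have mpos: "m > 0"
      proof (rule ccontr)
        assume "\<not> m > 0"
        then have m0: "m = 0" by simp
        obtain f where f: "f \<in> fspan n b" "nonzero_ae M f" using assms(4) by blast
        then obtain c where c: "f = lc n b c" unfolding fspan_lc by blast
        obtain c' where "AE x in M. lc n b c x = lc m B c' x" using fw by blast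
        then have "AE x in M. f x = 0" using c m0 by (simp add: lc_zero)
        then show False using f(2) by (simp add: nonzero_ae_def)
      qed
      have noSOS: "\<not>(\<exists>(k::nat) fs. (\<forall>j<k. \<exists>c. fs j = lc m B c) \<and> (AE x in M. (\<Sum>j<k. (fs j x)\<^sup>2) = 1))"
      proof
        assume "\<exists>(k::nat) fs. (\<forall>j<k. \<exists>c. fs j = lc m B c) \<and> (AE x in M. (\<Sum>j<k. (fs j x)\<^sup>2) = 1)"
        then obtain k :: nat and fs where fs: "\<forall>j<k. \<exists>c. fs j = lc m B c"
          and one: "AE x in M. (\<Sum>j<k. (fs j x)\<^sup>2) = 1" by blast
        have "\<forall>j. \<exists>c. j < k \<longrightarrow> (AE x in M. fs j x = lc n b c x)"
        proof
          fix j
          show "\<exists>c. j < k \<longrightarrow> (AE x in M. fs j x = lc n b c x)"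
          proof (cases "j < k")
            case True
            then obtain c' where "fs j = lc m B c'" using fs by blast
            moreover obtain c where "AE x in M. lc m B c' x = lc n b c x" using bw by blast
            ultimately show ?thesis by auto
          qed auto
        qed
        then obtain cf where cf: "\<And>j. j < k \<Longrightarrow> AE x in M. fs j x = lc n b (cf j) x" by metis
        have "AE x in M. \<forall>j\<in>{..<k}. fs j x = lc n b (cf j) x"
          by (rule eventually_ball_finite) (auto intro: cf)
        then have "AE x in M. (\<Sum>j<k. (lc n b (cf j) x)\<^sup>2) = 1" using one
          by eventually_elim simp
        moreover have "\<forall>j<k. lc n b (cf j) \<in> fspan n b" unfolding fspan_lc by blast
        ultimately have P: "(\<forall>j<k. lc n b (cf j) \<in> fspan n b) \<and> (AE x in M. (\<Sum>j<k. (lc n b (cf j) x)\<^sup>2) = 1)"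
          by simp
        have "\<exists>(k::nat) fs. (\<forall>j<k. fs j \<in> fspan n b) \<and> (AE x in M. (\<Sum>j<k. (fs j x)\<^sup>2) = 1)"
          apply (rule exI[where x=k])
          apply (rule exI[where x="\<lambda>j. lc n b (cf j)"])
          by (rule P)
        then show False using nS by (rule notE[rotated])
      qed
      obtain u where u: "u \<in> Linf_star M"
        and upos: "\<forall>c. nonzero_ae M (lc m B c) \<longrightarrow> quad_form M u (lc m B c) > 0"
      proof -
        have BL': "\<And>a. a < m \<Longrightarrow> B a \<in> Linf M" using BL by blast
        show ?thesis using core[OF fm pos mpos BL' ind noSOS] that by blast
      qed
      have uL: "u \<in> Linf M" using u by (simp add: Linf_star_def)
      obtain f where f: "f \<in> fspan n b" "nonzero_ae M f" "quad_form M u f \<le> 0"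
        using H u unfolding indefinite_on_def by blast
      obtain c where c: "f = lc n b c" using f(1) unfolding fspan_lc by blast
      obtain c' where c': "AE x in M. lc n b c x = lc m B c' x" using fw by blast
      have lcmL: "lc m B c' \<in> Linf M" by (rule lc_Linf) (use BL in blast)
      have "nonzero_ae M (lc m B c')"
        unfolding nonzero_ae_def
      proof
        assume "AE x in M. lc m B c' x = 0"
        then have "AE x in M. f x = 0" using c' unfolding c by eventually_elim simp
        then show False using f(2) by (simp add: nonzero_ae_def)
      qed
      then have "quad_form M u (lc m B c') > 0" using upos by blast
      moreover have "quad_form M u f = quad_form M u (lc m B c')"
        unfolding quad_form_def c using c' by (intro integral_cong_AE) (auto intro!: Linf_meas Linf_mult Linf_power2 lcL lcmL uL elim: AE_mp)
      ultimately show False using f(3) by simp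
    qed
  next
    assume "\<exists>(k::nat) fs. (\<forall>j<k. fs j \<in> fspan n b) \<and> (AE x in M. (\<Sum>j<k. (fs j x)\<^sup>2) = 1)"
    then obtain k :: nat and fs where fs: "\<forall>j<k. fs j \<in> fspan n b"
      and one: "AE x in M. (\<Sum>j<k. (fs j x)\<^sup>2) = 1" by blast
    have fsL: "fs j \<in> Linf M" if "j < k" for j using spL fs that by blast
    show "\<forall>u\<in>Linf_star M. indefinite_on M (fspan n b) (quad_form M u)"
    proof
      fix u assume u: "u \<in> Linf_star M"
      have uL: "u \<in> Linf M" and u0: "(\<integral>x. u x \<partial>M) = 0" using u by (auto simp: Linf_star_def)
      define Q where "Q = (\<lambda>j. quad_form M u (fs j))"
      have "(\<Sum>j<k. Q j) = (\<integral>x. (\<Sum>j<k. u x * (fs j x)\<^sup>2) \<partial>M)"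
        unfolding Q_def quad_form_def
        by (rule Bochner_Integration.integral_sum[symmetric]) (auto intro!: I Linf_mult Linf_power2 uL fsL)
      also have "\<dots> = (\<integral>x. u x \<partial>M)"
      proof (rule integral_cong_AE)
        show "(\<lambda>x. \<Sum>j<k. u x * (fs j x)\<^sup>2) \<in> borel_measurable M"
          by (auto intro!: Linf_meas Linf_sum Linf_mult Linf_power2 uL fsL)
        show "u \<in> borel_measurable M" using uL by (rule Linf_meas)
        show "AE x in M. (\<Sum>j<k. u x * (fs j x)\<^sup>2) = u x" using one
          by eventually_elim (simp add: sum_distrib_left[symmetric])
      qed
      finally have sumQ: "(\<Sum>j<k. Q j) = 0" using u0 by simp
      define J where "J = {j. j < k \<and> nonzero_ae M (fs j)}"
      have Qz: "Q j = 0" if "j < k" "j \<notin> J" for j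
      proof -
        have "AE x in M. fs j x = 0" using that by (simp add: J_def nonzero_ae_def)
        then have "quad_form M u (fs j) = (\<integral>x. 0 \<partial>M)"
          unfolding quad_form_def
          by (intro integral_cong_AE) (auto intro!: Linf_meas Linf_mult Linf_power2 uL fsL that elim: AE_mp)
        then show ?thesis by (simp add: Q_def)
      qed
      have fJ: "finite J" by (simp add: J_def)
      have sumJ: "(\<Sum>j\<in>J. Q j) = 0"
      proof -
        have "(\<Sum>j\<in>J. Q j) = (\<Sum>j<k. Q j)"
          by (rule sum.mono_neutral_left) (auto simp: J_def intro: Qz)
        then show ?thesis using sumQ by simp
      qed
      have Jne: "J \<noteq> {}"
      proof
        assume "J = {}"
        then have "\<forall>j<k. AE x in M. fs j x = 0" by (auto simp: J_def nonzero_ae_def)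
        then have "AE x in M. \<forall>j\<in>{..<k}. fs j x = 0"
          by (intro eventually_ball_finite) auto
        then have "AE x in M. False" using one by eventually_elim simp
        then have "ae_filter M = bot" using trivial_limit_def by blast
        then show False using pos by (simp add: ae_filter_eq_bot_iff)
      qed
      have "\<exists>j\<in>J. Q j \<le> 0"
      proof (rule ccontr)
        assume "\<not> ?thesis"
        then have "(\<Sum>j\<in>J. Q j) > 0" using fJ Jne by (intro sum_pos) auto
        then show False using sumJ by simp
      qed
      then obtain j1 where j1: "j1 \<in> J" "Q j1 \<le> 0" by blast
      have "\<exists>j\<in>J. Q j \<ge> 0"
      proof (rule ccontr)
        assume "\<not> ?thesis"
        then have "(\<Sum>j\<in>J. - Q j) > 0" using fJ Jne by (intro sum_pos) auto
        then show False using sumJ by (simp add: sum_negf)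
      qed
      then obtain j2 where j2: "j2 \<in> J" "Q j2 \<ge> 0" by blast
      show "indefinite_on M (fspan n b) (quad_form M u)"
        unfolding indefinite_on_def
        using j1 j2 fs by (intro bexI[of _ "fs j1"] bexI[of _ "fs j2"] conjI) (auto simp: J_def Q_def)
    qed
  qed
qed

end
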